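(* For integers $n>3$ and $k\ge1$, $F_{3,k}(n)=0$ if and only if $(k,n)\in\{(3,6),(5,6),(5,27),(9,27),(9,486)\}$. In particular $F_{3,k}$ has no positive integer root for $k>12$, and $F_{3,5}(x)=\tfrac12(x-6)(x-27)$, $F_{3,9}(x)=\tfrac12(x-27)(x-486)$.
   Context: For an integer $j\ge0$, $\binom{x}{j}=x(x-1)\cdots(x-j+1)/j!$ as a polynomial in $x$, and $\binom{x}{j}=0$ for $j<0$. For integers $s\ge1$, $k\ge1$, the Moser polynomial is $F_{s,k}(x)=\sum_{p=1}^{s}(-1)^{p-1}p^{k-1}\binom{x}{s-p}$; in particular $2F_{3,k}(x)=x^2-(2^k+1)x+2\cdot3^{k-1}$. *)

theory Defs
  imports Complex_Main
begin

definition moser :: "nat \<Rightarrow> nat \<Rightarrow> real \<Rightarrow> real" where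
  "moser s k x = (\<Sum>p=1..s. (-1)^(p-1) * (real p)^(k-1) * (x gchoose (s-p)))"

end

theory Submission imports Defs "HOL-Number_Theory.Number_Theory" begin

lemma ord32: "ord 3 (2::nat) = 2"
  by (simp add: ord_eq_2_iff cong_def)

lemma primroot3: "t > 0 \<Longrightarrow> residue_primroot (3^t) (2::nat)"
proof -
  have r: "residue_primroot 3 (2::nat)"
    by (simp add: residue_primroot_def ord32 totient_prime)
  have "[(2::nat) ^ (3 - 1) \<noteq> 1] (mod 3\<^sup>2)" by (simp add: cong_def)
  moreover have "prime (3::nat)" by simp
  ultimately have "\<forall>k>0. residue_primroot (3 ^ k) (2::nat)"
    using residue_primroot_prime_lift_iff[of 3 2] r by simp
  thus "t > 0 \<Longrightarrow> ?thesis" by blast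
qed

lemma val3: assumes "t \<ge> 1" "3^t dvd (2::nat)^m + 1" shows "3^(t-1) dvd m"
proof -
  have sq: "\<And>a::nat. a \<ge> 1 \<Longrightarrow> a*a - 1 = (a+1)*(a-1)"
    subgoal for a by (cases a) auto done
  have "(2::nat)^(2*m) = 2^m*2^m" by (simp add: mult_2 power_add)
  hence eq: "(2::nat)^(2*m) - 1 = (2^m+1)*(2^m - 1)" using sq[of "2^m"] by simp
  have "3^t dvd (2::nat)^(2*m) - 1" unfolding eq by (rule dvd_mult2[OF assms(2)])
  hence "[(2::nat)^(2*m) = 1] (mod 3^t)"
    by (simp add: cong_altdef_nat one_le_power)
  hence "ord (3^t) (2::nat) dvd 2*m" using ord_divides by blast
  moreover have "ord (3^t) (2::nat) = 2 * 3^(t-1)"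
    using primroot3[of t] assms(1) by (simp add: residue_primroot_def totient_prime_power)
  ultimately show ?thesis by simp
qed


lemma grow1: "K \<ge> 3 \<Longrightarrow> 2*2^K+1 < (3::nat)^K"
proof (induction K rule: dec_induct)
  case base then show ?case by simp
next
  case (step n)
  have "2*2^(Suc n)+1 \<le> 2*(2*2^n+(1::nat))" by simp
  also have "\<dots> < 2*3^n" using step.IH by simp
  also have "\<dots> < 3*3^n" by simp
  finally show ?case by simp
qed

lemma grow2: "K \<ge> 11 \<Longrightarrow> (2*2^K+1)*(K+1) < (3::nat)^(K-1)"
proof (induction K rule: dec_induct)
  case base then show ?case by simp
next
  case (step n)
  define X where "X = (2*2^n+1)*(n+1::nat)"
  have a: "2*2^(Suc n)+1 \<le> 2*(2*2^n+1::nat)" by simp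
  have b: "2*(Suc n + 1) \<le> 3*(n+1)" using step by simp
  have c: "(2*2^(Suc n)+1)*(2*(Suc n + 1)) \<le> (2*(2*2^n+1::nat))*(3*(n+1))"
    using mult_le_mono[OF a b] .
  have d: "(2*(2*2^n+1::nat))*(3*(n+1)) = 6*X" unfolding X_def by (simp add: algebra_simps)
  have e: "X < 3^(n-1)" using step.IH X_def by simp
  have f: "(3::nat)^n = 3*3^(n-1)" using step by (metis Suc_diff_1 less_le_trans power_Suc zero_less_numeral le_numeral_extra(2) numeral_le_iff)
  have "(2*2^(Suc n)+1)*(2*(Suc n + 1)) < 2*(3::nat)^n" using c d e f by linarith
  thus ?case by simp
qed

lemma eqn: assumes "3^b + 2*3^c = 2*2^(b+c)+(1::nat)"
  shows "(b,c) \<in> {(0,0),(1,0),(1,1),(3,1),(3,5)}"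
proof -
  define K where "K = b+c"
  have le: "3^(max b c) \<le> 2*2^K+(1::nat)"
    using assms K_def by (cases "b \<le> c") (auto simp: max_def)
  have "K \<le> 10"
  proof (cases "min b c = 0")
    case True
    hence "max b c = K" using K_def by auto
    with le have "3^K \<le> 2*2^K+(1::nat)" by simp
    thus ?thesis using grow1[of K] by (cases "K \<ge> 3") auto
  next
    case False
    define t where "t = min b c"
    have "3^t dvd (3::nat)^b" "3^t dvd (3::nat)^c" using t_def by (auto intro: le_imp_power_dvd)
    hence "3^t dvd 3^b + 2*(3::nat)^c" by auto
    hence "3^t dvd (2::nat)^(K+1)+1" using assms K_def by simp
    hence "3^(t-1) dvd K+1" using val3 False t_def by auto
    hence d: "3^(t-1) \<le> K+1" by (simp add: dvd_imp_le)
    have m: "max b c = K - t" using K_def t_def by auto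
    have "3^(K-1) = (3::nat)^(K-t) * 3^(t-1)"
      using False t_def K_def by (simp flip: power_add)
    also have "\<dots> \<le> (2*2^K+1)*(K+1)" using le d m by (intro mult_le_mono) auto
    finally show ?thesis using grow2[of K] by (cases "K \<ge> 11") auto
  qed
  hence "b \<le> 10" "c \<le> 10 - b" using K_def by auto
  have cs: "c \<le> 10" using \<open>c \<le> 10 - b\<close> by simp
  have bb: "b \<in> {0,1,2,3,4,5,6,7,8,9,10}" using \<open>b \<le> 10\<close> by simp presburger
  have cc: "c \<in> {0,1,2,3,4,5,6,7,8,9,10}" using cs by simp presburger
  show ?thesis using bb cc assms \<open>c \<le> 10 - b\<close>
    apply (elim insertE emptyE)
    apply (simp_all only:)
    apply simp_all
    done
qed
lemma split3: assumes "u*v = 2*(3::nat)^K" "odd u"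
  shows "\<exists>b c. u = 3^b \<and> v = 2*3^c \<and> b+c = K"
proof -
  have "even (u*v)" using assms(1) by simp
  hence "even v" using assms(2) by simp
  then obtain w where w: "v = 2*w" by blast
  hence uw: "u*w = 3^K" using assms(1) by simp
  hence "u dvd 3^K" by (metis dvd_triv_left)
  then obtain b where b: "b \<le> K" "u = 3^b" using divides_primepow_nat[of 3 u K] by auto
  have "3^b * 3^(K-b) = (3::nat)^K" using b by (simp flip: power_add)
  with uw b have "3^b*w = 3^b*3^(K-b)" by simp
  hence "w = 3^(K-b)" by simp
  thus ?thesis using b w by (intro exI[of _ b] exI[of _ "K-b"]) auto
qed

lemma roots: assumes "n*n + 2*3^K = (2*2^K+1)*(n::nat)"
  shows "(K,n) \<in> {(0,1),(0,2),(1,3),(1,2),(2,3),(2,6),(4,27),(4,6),(8,27),(8,486)}"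
proof -
  define S where "S = 2*2^K+(1::nat)"
  have e: "n*n + 2*3^K = S*n" using assms S_def by simp
  have "n \<le> S"
  proof (rule ccontr)
    assume "\<not> n \<le> S" hence "S*n < n*n" by simp
    with e show False by simp
  qed
  define m where "m = S - n"
  have nm: "n + m = S" using \<open>n \<le> S\<close> m_def by simp
  have "n*m = S*n - n*n" using m_def by (simp add: diff_mult_distrib2 mult.commute)
  hence p: "n*m = 2*3^K" using e by simp
  have E: "\<And>b c. 3^b + 2*3^c = S \<Longrightarrow> b + c = K \<Longrightarrow> (b,c) \<in> {(0,0),(1,0),(1,1),(3,1),(3,5)}"
    using eqn S_def by blast
  show ?thesis
  proof (cases "odd n")
    case True
    then obtain b c where bc: "n = 3^b" "m = 2*3^c" "b+c = K" using split3[OF p] by blast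
    have "3^b + 2*3^c = S" using nm bc by (simp add: add_ac)
    hence "(b,c) \<in> {(0,0),(1,0),(1,1),(3,1),(3,5)}" using E bc(3) by blast
    hence "(b,c) = (0,0) \<or> (b,c) = (1,0) \<or> (b,c) = (1,1) \<or> (b,c) = (3,1) \<or> (b,c) = (3,5)" by simp
    thus ?thesis unfolding bc(1) bc(3)[symmetric] by (elim disjE) simp_all
  next
    case False
    have "odd m"
    proof
      assume "even m"
      then obtain b2 where b2: "m = 2*b2" by blast
      obtain a where a: "n = 2*a" using False by blast
      have "2*(3::nat)^K = 2*(2*(a*b2))" using p a b2 by (simp add: mult_ac)
      hence "(3::nat)^K = 2*(a*b2)" by linarith
      hence "even ((3::nat)^K)" by simp
      thus False by simp
    qed
    then obtain b c where bc: "m = 3^b" "n = 2*3^c" "b+c = K" using split3[of m n K] p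
      by (auto simp: mult.commute)
    have "3^b + 2*3^c = S" using nm bc by (simp add: add_ac)
    hence "(b,c) \<in> {(0,0),(1,0),(1,1),(3,1),(3,5)}" using E bc(3) by blast
    hence "(b,c) = (0,0) \<or> (b,c) = (1,0) \<or> (b,c) = (1,1) \<or> (b,c) = (3,1) \<or> (b,c) = (3,5)" by simp
    thus ?thesis unfolding bc(2) bc(3)[symmetric] by (elim disjE) simp_all
  qed
qed

lemma g2: "(x::real) gchoose 2 = x*(x-1)/2"
proof -
  have "x gchoose (Suc 1) = (\<Prod>i=0..1. x - real i)/fact (Suc 1)" by (rule gbinomial_Suc)
  hence "x gchoose 2 = (\<Prod>i=0..1. x - real i)/fact 2" by (simp only: Suc_1)
  thus ?thesis by (simp add: field_simps)
qed
lemma g2': "(x::real) gchoose Suc (Suc 0) = x*(x-1)/2"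
  using g2 by (simp add: numeral_2_eq_2)
lemma moser3: "moser 3 k x = x*(x-1)/2 - 2^(k-1)*x + 3^(k-1)"
  unfolding moser_def by (simp add: g2 g2' numeral_3_eq_3 sum.atLeast_Suc_atMost)
lemma nat_eq: assumes "k \<ge> 1"
  shows "moser 3 k (real n) = 0 \<longleftrightarrow> n*n + 2*3^(k-1) = (2*2^(k-1)+1)*n"
proof -
  have "real (n*n + 2*3^(k-1)) - real ((2*2^(k-1)+1)*n) = 2 * moser 3 k (real n)"
    using assms by (simp add: moser3 algebra_simps add_divide_distrib diff_divide_distrib)
  hence "moser 3 k (real n) = 0 \<longleftrightarrow> real (n*n + 2*3^(k-1)) = real ((2*2^(k-1)+1)*n)"
    by linarith
  thus ?thesis by (simp only: of_nat_eq_iff)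
qed

theorem mainTheorem12:
  shows "(\<forall>(n::nat) (k::nat). n > 3 \<longrightarrow> k \<ge> 1 \<longrightarrow>
            (moser 3 k (real n) = 0 \<longleftrightarrow>
             (k, n) \<in> {(3,6), (5,6), (5,27), (9,27), (9,486)}))
       \<and> (\<forall>(k::nat) (n::nat). k > 12 \<longrightarrow> n \<ge> 1 \<longrightarrow> moser 3 k (real n) \<noteq> 0)
       \<and> (\<forall>x::real. moser 3 5 x = (1/2) * (x - 6) * (x - 27))
       \<and> (\<forall>x::real. moser 3 9 x = (1/2) * (x - 27) * (x - 486))"
proof (intro conjI allI impI)
  fix n k :: nat assume n: "n > 3" and k: "k \<ge> 1"
  show "moser 3 k (real n) = 0 \<longleftrightarrow> (k, n) \<in> {(3,6), (5,6), (5,27), (9,27), (9,486)}"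
  proof
    assume "moser 3 k (real n) = 0"
    obtain K where kK: "k = Suc K" using k by (cases k) auto
    have "(K,n) \<in> {(0,1),(0,2),(1,3),(1,2),(2,3),(2,6),(4,27),(4,6),(8,27),(8,486)}"
      using nat_eq[OF k] roots \<open>moser 3 k (real n) = 0\<close> kK by simp
    thus "(k, n) \<in> {(3,6), (5,6), (5,27), (9,27), (9,486)}" using n unfolding kK by auto
  next
    assume "(k, n) \<in> {(3,6), (5,6), (5,27), (9,27), (9,486)}"
    thus "moser 3 k (real n) = 0" unfolding nat_eq[OF k] by (elim insertE emptyE) simp_all
  qed
next
  fix k n :: nat assume k: "k > 12" and "n \<ge> 1"
  show "moser 3 k (real n) \<noteq> 0"
  proof
    assume "moser 3 k (real n) = 0"
    obtain K where kK: "k = Suc K" using k by (cases k) auto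
    have "(K,n) \<in> {(0,1),(0,2),(1,3),(1,2),(2,3),(2,6),(4,27),(4,6),(8,27),(8,486)}"
      using nat_eq[of k n] roots \<open>moser 3 k (real n) = 0\<close> kK by simp
    thus False using k unfolding kK by auto
  qed
next
  fix x :: real
  show "moser 3 5 x = (1/2) * (x - 6) * (x - 27)" by (simp add: moser3 field_simps) algebra
next
  fix x :: real
  show "moser 3 9 x = (1/2) * (x - 27) * (x - 486)" by (simp add: moser3 field_simps) algebra
qed
end
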